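(* Let $n\ge1$ and $k=2$. For a general parameter $((\mu_1,\mu_2),(\lambda_1,\lambda_2),\Sigma)\in\Theta^H_{n,2}$ with $\lambda_1,\lambda_2\in(0,1)$, any parameter $((\mu_1',\mu_2'),(\lambda_1',\lambda_2'),\Sigma')\in\Theta^H_{n,2}$ with $\lambda_1',\lambda_2'\in(0,1)$ and the same moments up to order $4$ (i.e. $M_{n,2,4}$ takes the same value on both) coincides with the original one up to exchanging $(\mu_1,\lambda_1)$ and $(\mu_2,\lambda_2)$. That is, the statistically meaningful mixture parameters are recovered uniquely from moments up to order $4$.
   Context: $\Theta^H_{n,2}=\{((\mu_1,\mu_2),(\lambda_1,\lambda_2),\Sigma):\mu_i\in\mathbb{R}^n,\ \lambda_i\in\mathbb{R},\ \lambda_1+\lambda_2=1,\ \Sigma\in\mathbb{R}^{n\times n}\text{ symmetric}\}$. With $u=(u_1,\dots,u_n)$, the map $M_{n,2,4}$ sends a parameter to the coefficient vector $(m_a)_{1\le|a|\le 4}$ of the truncation modulo $(u)^{5}$ of $\sum_{i=1}^2\lambda_i\exp(u^t\mu_i+\tfrac12u^t\Sigma u)=\sum_a m_a u^a/a!$, i.e. the moments of order $\le4$ of the mixture $\lambda_1\mathcal N(\mu_1,\Sigma)+\lambda_2\mathcal N(\mu_2,\Sigma)$. *)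

theory Defs
  imports "HOL-Analysis.Analysis"
begin

text \<open>A parameter ((mu1,mu2),(lambda1,lambda2),Sigma) of Theta^H_{n,2}.
  The dimension n is the cardinality of the finite index type 'n.\<close>
type_synonym 'n param = "((real^'n) \<times> (real^'n)) \<times> (real \<times> real) \<times> (real^'n^'n)"

definition ThetaH :: "('n::finite) param set" where
  "ThetaH = {((m1, m2), (l1, l2), S). l1 + l2 = 1 \<and> transpose S = S}"

definition weights_in_01 :: "('n::finite) param \<Rightarrow> bool" where
  "weights_in_01 \<theta> = (case \<theta> of ((m1, m2), (l1, l2), S) \<Rightarrow>
      0 < l1 \<and> l1 < 1 \<and> 0 < l2 \<and> l2 < 1)"

definition swap_param :: "('n::finite) param \<Rightarrow> 'n param" where
  "swap_param \<theta> = (case \<theta> of ((m1, m2), (l1, l2), S) \<Rightarrow> ((m2, m1), (l2, l1), S))"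

definition mgf :: "('n::finite) param \<Rightarrow> real^'n \<Rightarrow> real" where
  "mgf \<theta> u = (case \<theta> of ((m1, m2), (l1, l2), S) \<Rightarrow>
      l1 * exp (u \<bullet> m1 + (1/2) * (u \<bullet> (S *v u)))
    + l2 * exp (u \<bullet> m2 + (1/2) * (u \<bullet> (S *v u))))"

fun pd :: "('n::finite) list \<Rightarrow> (real^'n \<Rightarrow> real) \<Rightarrow> real^'n \<Rightarrow> real" where
  "pd [] F u = F u"
| "pd (j # js) F u = deriv (\<lambda>t. pd js F (u + t *\<^sub>R axis j 1)) 0"

text \<open>The moment map M_{n,2,4}: the moment m_a (a multi-index, 1 <= |a| <= 4) is the
  coefficient a! * [u^a] of the Taylor expansion, i.e. the partial derivative
  d^a of the mgf at u = 0.  A multi-index is encoded by any list of coordinate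
  indices containing j exactly a_j times (mixed partials commute).\<close>
definition M4 :: "('n::finite) param \<Rightarrow> 'n list \<Rightarrow> real" where
  "M4 \<theta> js = (if 1 \<le> length js \<and> length js \<le> 4 then pd js (mgf \<theta>) 0 else 0)"

inductive_set param_polys :: "(('n::finite) param \<Rightarrow> real) set" where
  pconst: "(\<lambda>\<theta>. c) \<in> param_polys"
| pmu1: "(\<lambda>\<theta>. fst (fst \<theta>) $ j) \<in> param_polys"
| pmu2: "(\<lambda>\<theta>. snd (fst \<theta>) $ j) \<in> param_polys"
| plam1: "(\<lambda>\<theta>. fst (fst (snd \<theta>))) \<in> param_polys"
| plam2: "(\<lambda>\<theta>. snd (fst (snd \<theta>))) \<in> param_polys"
| psig: "(\<lambda>\<theta>. snd (snd \<theta>) $ i $ j) \<in> param_polys"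
| padd: "p \<in> param_polys \<Longrightarrow> q \<in> param_polys \<Longrightarrow> (\<lambda>\<theta>. p \<theta> + q \<theta>) \<in> param_polys"
| pmult: "p \<in> param_polys \<Longrightarrow> q \<in> param_polys \<Longrightarrow> (\<lambda>\<theta>. p \<theta> * q \<theta>) \<in> param_polys"

end

theory Submission
  imports Defs
begin


definition Dv :: "'n::finite \<Rightarrow> (real^'n \<Rightarrow> real) \<Rightarrow> real^'n \<Rightarrow> real" where
  "Dv j F u = deriv (\<lambda>t. F (u + t *\<^sub>R axis j 1)) 0"

lemma pd_Cons: "pd (j # js) F u = Dv j (pd js F) u"
  by (simp add: Dv_def)

lemma Dv_eq:
  fixes j :: "'n::finite" and u :: "real^'n"
  assumes "(F has_derivative F') (at u)"
  shows "Dv j F u = F' (axis j 1)"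
proof -
  let ?e = "axis j 1 :: real^'n"
  have l: "((\<lambda>t::real. u + t *\<^sub>R ?e) has_derivative (\<lambda>t. t *\<^sub>R ?e)) (at 0)"
    by (auto intro!: derivative_eq_intros)
  have F0: "(F has_derivative F') (at (u + 0 *\<^sub>R ?e))" using assms by simp
  have "((\<lambda>t. F (u + t *\<^sub>R ?e)) has_derivative (\<lambda>t. F' (t *\<^sub>R ?e))) (at 0)"
    using has_derivative_compose[OF l F0] by (simp add: o_def)
  moreover have "(\<lambda>t. F' (t *\<^sub>R ?e)) = (\<lambda>t. t * F' ?e)"
    using has_derivative_linear[OF assms] by (simp add: linear_scale)
  ultimately have "((\<lambda>t. F (u + t *\<^sub>R ?e)) has_real_derivative F' ?e) (at 0)"
    by (simp add: has_field_derivative_def mult.commute[of _ "F' _"] cong: rev_conj_cong)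
  then show ?thesis unfolding Dv_def by (rule DERIV_imp_deriv)
qed

lemma Dv_const[simp]: "Dv j (\<lambda>u. c) u = 0"
  by (subst Dv_eq[where F'="\<lambda>h. 0"]) (auto intro!: derivative_eq_intros)

lemma Dv_add[simp]:
  assumes "F differentiable at u" "G differentiable at u"
  shows "Dv j (\<lambda>u. F u + G u) u = Dv j F u + Dv j G u"
proof -
  obtain F' G' where F: "(F has_derivative F') (at u)" and G: "(G has_derivative G') (at u)"
    using assms by (auto simp: differentiable_def)
  show ?thesis using Dv_eq[OF F] Dv_eq[OF G] Dv_eq[OF has_derivative_add[OF F G]] by simp
qed

lemma Dv_mult[simp]:
  assumes "F differentiable at u" "G differentiable at u"
  shows "Dv j (\<lambda>u. F u * G u) u = Dv j F u * G u + F u * Dv j G u"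
proof -
  obtain F' G' where F: "(F has_derivative F') (at u)" and G: "(G has_derivative G') (at u)"
    using assms by (auto simp: differentiable_def)
  show ?thesis using Dv_eq[OF F] Dv_eq[OF G] Dv_eq[OF has_derivative_mult[OF F G]] by simp
qed

definition Eg :: "real^'n::finite \<Rightarrow> real^'n^'n \<Rightarrow> real^'n \<Rightarrow> real" where
  "Eg m S u = exp (u \<bullet> m + (1/2) * (u \<bullet> (S *v u)))"

definition gg :: "real^'n::finite \<Rightarrow> real^'n^'n \<Rightarrow> 'n \<Rightarrow> real^'n \<Rightarrow> real" where
  "gg m S l u = m $ l + (S *v u) $ l"

lemma Eg_deriv: "(Eg m S has_derivative
   (\<lambda>h. Eg m S u * (h \<bullet> m + (1/2) * (h \<bullet> (S *v u) + u \<bullet> (S *v h))))) (at u)"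
  unfolding Eg_def
  by (auto intro!: derivative_eq_intros bounded_linear_imp_has_derivative simp: matrix_vector_right_distrib algebra_simps)

lemma gg_deriv: "(gg m S l has_derivative (\<lambda>h. (S *v h) $ l)) (at u)"
proof -
  have "bounded_linear (\<lambda>h. (S *v h) $ l)"
    using bounded_linear_compose[OF bounded_linear_vec_nth matrix_vector_mul_bounded_linear, of S l] by (simp add: o_def)
  then show ?thesis unfolding gg_def
    by (auto intro!: derivative_eq_intros bounded_linear_imp_has_derivative)
qed

lemma Eg_diff[simp]: "Eg m S differentiable at u"
  using Eg_deriv differentiable_def by blast
lemma gg_diff[simp]: "gg m S l differentiable at u"
  using gg_deriv differentiable_def by blast
lemma Eg_diff'[simp]: "(\<lambda>u. Eg m S u) differentiable at u"
  using Eg_deriv differentiable_def by blast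
lemma gg_diff'[simp]: "(\<lambda>u. gg m S l u) differentiable at u"
  using gg_deriv differentiable_def by blast

lemma Dv_gg[simp]: "Dv j (gg m S l) u = S $ l $ j"
  by (simp add: Dv_eq[OF gg_deriv] matrix_vector_mult_basis column_def)
lemma Dv_gg'[simp]: "Dv j (\<lambda>u. gg m S l u) u = S $ l $ j"
  using Dv_gg by (metis (no_types))

lemma sym_inner: assumes "transpose S = S"
  shows "u \<bullet> (S *v axis j 1) = (S *v u) $ j"
proof -
  have "u \<bullet> (S *v axis j 1) = (\<Sum>i\<in>UNIV. u $ i * S $ i $ j)"
    by (simp add: matrix_vector_mult_basis column_def inner_vec_def)
  also have "\<dots> = (\<Sum>i\<in>UNIV. S $ j $ i * u $ i)"
    using assms by (metis (no_types, lifting) mult.commute transpose_def vec_lambda_beta)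
  finally show ?thesis by (simp add: matrix_vector_mult_def)
qed

lemma Dv_Eg[simp]: assumes "transpose S = S"
  shows "Dv j (Eg m S) u = gg m S j u * Eg m S u"
  by (simp add: Dv_eq[OF Eg_deriv] sym_inner[OF assms] gg_def cart_eq_inner_axis inner_commute)
lemma Dv_Eg'[simp]: assumes "transpose S = S"
  shows "Dv j (\<lambda>u. Eg m S u) u = gg m S j u * Eg m S u"
  using Dv_Eg[OF assms] by (metis (no_types))

lemma Eg0[simp]: "Eg m S 0 = 1" by (simp add: Eg_def)
lemma gg0[simp]: "gg m S l 0 = m $ l" by (simp add: gg_def)



lemma pd_Cons': "pd (j # js) F u = Dv j (\<lambda>v. pd js F v) u"
  by (simp add: Dv_def)

lemma mgf_eq: "mgf ((m1,m2),(l1,l2),S) = (\<lambda>u. l1 * Eg m1 S u + l2 * Eg m2 S u)"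
  by (simp add: mgf_def Eg_def fun_eq_iff)




lemma kfac: "(2*w^3+3*w^2-1) - (2*w'^3+3*w'^2-1) = (w - w') * (2*(w^2+w*w'+w'^2) + 3*(w+w'))"
  for w w' :: real
  by (simp add: algebra_simps power2_eq_square power3_eq_cube)

lemma kinj:
  fixes w w' :: real
  assumes "w > 1/2 \<or> w < -1" "w' > 1/2 \<or> w' < -1"
    and "2*w^3+3*w^2-1 = 2*w'^3+3*w'^2-1"
  shows "w = w'"
proof -
  have pos: "2*w^3+3*w^2-1 > 0" if "z > 1/2" "w = z" for z
  proof -
    have "2*w^3+3*w^2-1 = (2*w-1)*(1+w)^2" by (simp add: algebra_simps power2_eq_square power3_eq_cube)
    moreover have "(2*w-1)*(1+w)^2 > 0" using that by (intro mult_pos_pos) auto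
    ultimately show ?thesis by simp
  qed
  have pos': "2*w'^3+3*w'^2-1 > 0" if "w' > 1/2"
  proof -
    have "2*w'^3+3*w'^2-1 = (2*w'-1)*(1+w')^2" by (simp add: algebra_simps power2_eq_square power3_eq_cube)
    moreover have "(2*w'-1)*(1+w')^2 > 0" using that by (intro mult_pos_pos) auto
    ultimately show ?thesis by simp
  qed
  have neg: "2*w^3+3*w^2-1 < 0" if "w < -1"
  proof -
    have "2*w^3+3*w^2-1 = (2*w-1)*(1+w)^2" by (simp add: algebra_simps power2_eq_square power3_eq_cube)
    moreover have "(1+w)^2 > 0" using that by simp
    moreover have "(2*w-1)*(1+w)^2 < 0" using that calculation(2) by (intro mult_neg_pos) auto
    ultimately show ?thesis by simp
  qed
  have neg': "2*w'^3+3*w'^2-1 < 0" if "w' < -1"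
  proof -
    have "2*w'^3+3*w'^2-1 = (2*w'-1)*(1+w')^2" by (simp add: algebra_simps power2_eq_square power3_eq_cube)
    moreover have "(1+w')^2 > 0" using that by simp
    moreover have "(2*w'-1)*(1+w')^2 < 0" using that calculation(2) by (intro mult_neg_pos) auto
    ultimately show ?thesis by simp
  qed
  have F: "2*(w^2+w*w'+w'^2) + 3*(w+w') > 0"
  proof (cases "w > 1/2")
    case True
    then have "w' > 1/2" using assms neg' pos by (metis order_less_asym)
    then have "w*w' > 0" using True by (intro mult_pos_pos) auto
    moreover have "w^2 > 0" "w'^2 > 0" using True \<open>w' > 1/2\<close> by auto
    ultimately show ?thesis using True \<open>w' > 1/2\<close> by (intro add_pos_pos mult_pos_pos) auto
  next
    case False
    then have "w < -1" using assms by auto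
    then have "w' < -1" using assms neg pos' by (metis order_less_asym)
    define a where "a = -1 - w"
    define b where "b = -1 - w'"
    have a: "a > 0" "b > 0" using \<open>w < -1\<close> \<open>w' < -1\<close> by (auto simp: a_def b_def)
    have "2*(w^2+w*w'+w'^2) + 3*(w+w') = 3*a + 3*b + 2*(a^2+a*b+b^2)"
      by (simp add: a_def b_def algebra_simps power2_eq_square)
    moreover have "a*b > 0" "a^2 > 0" "b^2>0" using a by auto
    moreover have "3*a + 3*b + 2*(a^2+a*b+b^2) > 0" using a by (intro add_pos_pos mult_pos_pos) auto
    ultimately show ?thesis by simp
  qed
  have "(w - w') * (2*(w^2+w*w'+w'^2) + 3*(w+w')) = 0" using kfac[of w w'] assms(3) by simp
  then show ?thesis using F by simp
qed

lemma yinj: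
  fixes y y' P Q :: real
  assumes P: "P > 0" and y: "-1 < y" "y < 2" and y': "-1 < y'" "y' < 2"
    and e: "P * y^3 = (2-y)*(y+1)^2 * Q" and e': "P * y'^3 = (2-y')*(y'+1)^2 * Q"
  shows "y = y'"
proof (cases "Q = 0")
  case True
  then show ?thesis using e e' P by simp
next
  case False
  have nz: "(2-y)*(y+1)^2 \<noteq> 0" "(2-y')*(y'+1)^2 \<noteq> 0" using y y' by auto
  have "y \<noteq> 0" using e nz False by auto
  have "y' \<noteq> 0" using e' nz False by auto
  define w where "w = 1 / y"
  define w' where "w' = 1 / y'"
  have k: "P / Q = 2*w^3+3*w^2-1" 
    using e \<open>y \<noteq> 0\<close> False unfolding w_def
    by (simp add: field_simps power2_eq_square power3_eq_cube)
  have k': "P / Q = 2*w'^3+3*w'^2-1" 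
    using e' \<open>y' \<noteq> 0\<close> False unfolding w'_def
    by (simp add: field_simps power2_eq_square power3_eq_cube)
  have wr: "w > 1/2 \<or> w < -1"
  proof (cases "y > 0")
    case True then show ?thesis using y unfolding w_def by (auto simp: field_simps)
  next
    case False then have "y < 0" using \<open>y \<noteq> 0\<close> by simp
    then show ?thesis using y unfolding w_def by (auto simp: field_simps)
  qed
  have wr': "w' > 1/2 \<or> w' < -1"
  proof (cases "y' > 0")
    case True then show ?thesis using y' unfolding w'_def by (auto simp: field_simps)
  next
    case False then have "y' < 0" using \<open>y' \<noteq> 0\<close> by simp
    then show ?thesis using y' unfolding w'_def by (auto simp: field_simps)
  qed
  have "w = w'" using kinj[OF wr wr'] k k' by simp
  then show ?thesis unfolding w_def w'_def by simp
qed

lemma cube_inj: "x^3 = y^3 \<Longrightarrow> x = (y::real)"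
  by (metis odd_real_root_power_cancel odd_numeral)

lemma key:
  fixes l1 l2 l1' l2' x x' :: real
  assumes s: "l1+l2=1" "l1'+l2'=1" and b: "0<l1" "l1<1" "0<l1'" "l1'<1"
    and C3: "l1*l2*(l2-l1)*x^3 = l1'*l2'*(l2'-l1')*x'^3"
    and nz: "(l2-l1)*x \<noteq> 0"
    and C4: "l1*l2*(1-6*l1*l2)*x^4 = l1'*l2'*(1-6*l1'*l2')*x'^4"
  shows "(l1'=l1 \<and> l2'=l2 \<and> x'=x) \<or> (l1'=l2 \<and> l2'=l1 \<and> x'=-x)"
proof -
  have l2: "l2 = 1 - l1" "l2' = 1 - l1'" using s by auto
  define r where "r = l2 - l1"
  define r' where "r' = l2' - l1'"
  define y where "y = 3*r^2 - 1"
  define y' where "y' = 3*r'^2 - 1"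
  define c3 where "c3 = l1*l2*(l2-l1)*x^3"
  define c4 where "c4 = l1*l2*(1-6*l1*l2)*x^4"
  have id: "(27*c3^4) * y^3 = (2-y)*(y+1)^2*(2*c4^3)"
    unfolding c3_def c4_def y_def r_def l2 by algebra
  have id': "(27*c3^4) * y'^3 = (2-y')*(y'+1)^2*(2*c4^3)"
  proof -
    have c3': "c3 = l1'*l2'*(l2'-l1')*x'^3" using C3 c3_def by simp
    have c4': "c4 = l1'*l2'*(1-6*l1'*l2')*x'^4" using C4 c4_def by simp
    show ?thesis unfolding c3' c4' y'_def r'_def l2 by algebra
  qed
  have "l1*l2 > 0" using b s by simp
  moreover have "(l2-l1)*x^3 \<noteq> 0" using nz by simp
  ultimately have "c3 \<noteq> 0" unfolding c3_def by (metis mult.assoc mult_eq_0_iff less_irrefl)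
  then have P: "27*c3^4 > 0" by simp
  have "r \<noteq> 0" using nz r_def by auto
  have "r' \<noteq> 0" using \<open>c3 \<noteq> 0\<close> C3 unfolding c3_def r'_def by auto
  have rb: "r^2 < 1" "r'^2 < 1" unfolding r_def r'_def l2 using b
    by (simp_all add: abs_square_less_1)
  have yb: "-1 < y" "y < 2" "-1 < y'" "y' < 2" using rb \<open>r \<noteq> 0\<close> \<open>r' \<noteq> 0\<close>
    unfolding y_def y'_def by auto
  have "y = y'" using yinj[OF P yb(1,2) yb(3,4) id id'] .
  then have rr: "r'^2 = r^2" unfolding y_def y'_def by simp
  then have ss: "l1'*l2' = l1*l2" unfolding r_def r'_def l2 by algebra
  have "l1*l2 \<noteq> 0" using b s by simp
  then have rx: "r*x^3 = r'*x'^3" using C3 ss unfolding r_def r'_def by simp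
  from rr have "r' = r \<or> r' = -r" by (metis power2_eq_iff)
  then show ?thesis
  proof
    assume "r' = r"
    then have "x^3 = x'^3" using rx \<open>r \<noteq> 0\<close> by simp
    then have "x' = x" using cube_inj by metis
    moreover have "l1' = l1" using \<open>r' = r\<close> unfolding r_def r'_def l2 by simp
    ultimately show ?thesis using l2 by simp
  next
    assume "r' = -r"
    then have "r*(x'^3 + x^3) = 0" using rx by (simp add: algebra_simps)
    then have "x'^3 = (-x)^3" using \<open>r \<noteq> 0\<close> by (simp add: add_eq_0_iff2)
    then have "x' = -x" using cube_inj by metis
    moreover have "l1' = l2" using \<open>r' = -r\<close> unfolding r_def r'_def l2 by simp
    ultimately show ?thesis using l2 by simp
  qed
qed


lemma c2s: fixes l1 l2 s a b c d :: real assumes "l1 + l2 = 1"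
  shows "(l1 * (s + a * b) + l2 * (s + c * d)) - (l1 * b + l2 * d) * (l1 * a + l2 * c) = s + l1*l2*(b-d)*(a-c)"
  using assms by algebra
lemma c3s: fixes l1 l2 p1 p2 u1 u2 sa sj :: real assumes "l1 + l2 = 1"
  shows "(l1 * (sj * p1 + (sj * p1 + u1 * (sa + p1 * p1))) + l2 * (sj * p2 + (sj * p2 + u2 * (sa + p2 * p2)))) - 2 * (l1 * p1 + l2 * p2) * (l1 * (sj + u1 * p1) + l2 * (sj + u2 * p2)) - (l1 * u1 + l2 * u2) * (l1 * (sa + p1 * p1) + l2 * (sa + p2 * p2)) + 2 * (l1 * p1 + l2 * p2)^2 * (l1 * u1 + l2 * u2) = l1 * l2 * (l2 - l1) * (p1 - p2)^2 * (u1 - u2)"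
  using assms by algebra
lemma c4s: fixes l1 l2 p1 p2 s :: real assumes "l1 + l2 = 1"
  shows "(l1 * (s * (s + p1 * p1) + (s * (s + p1 * p1) + (s * (s + p1 * p1) + p1 * (s * p1 + (s * p1 + p1 * (s + p1 * p1)))))) + l2 * (s * (s + p2 * p2) + (s * (s + p2 * p2) + (s * (s + p2 * p2) + p2 * (s * p2 + (s * p2 + p2 * (s + p2 * p2))))))) - 4 * (l1 * (s * p1 + (s * p1 + p1 * (s + p1 * p1))) + l2 * (s * p2 + (s * p2 + p2 * (s + p2 * p2)))) * (l1 * p1 + l2 * p2) - 3 * (l1 * (s + p1 * p1) + l2 * (s + p2 * p2))^2 + 12 * (l1 * (s + p1 * p1) + l2 * (s + p2 * p2)) * (l1 * p1 + l2 * p2)^2 - 6 * (l1 * p1 + l2 * p2)^4 = l1*l2*(1-6*l1*l2)*(p1-p2)^4"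
  using assms by algebra


lemma symS: "transpose S = S \<Longrightarrow> S $ i $ j = S $ j $ i"
  by (metis transpose_def vec_lambda_beta)

lemma P1: assumes "transpose S = S"
  shows "pd [i] (\<lambda>u. l1 * Eg m1 S u + l2 * Eg m2 S u) 0 = l1*m1$i + l2*m2$i"
  apply (simp only: pd_Cons' pd.simps(1))
  apply (simp add: assms)
  done

lemma P2: assumes "transpose S = S"
  shows "pd [i,j] (\<lambda>u. l1 * Eg m1 S u + l2 * Eg m2 S u) 0 =
    l1 * (S $ j $ i + m1 $ j * m1 $ i) + l2 * (S $ j $ i + m2 $ j * m2 $ i)"
  apply (simp only: pd_Cons' pd.simps(1))
  apply (simp add: assms)
  done

lemma P3: assumes "transpose S = S"
  shows "pd [i,j,k] (\<lambda>u. l1 * Eg m1 S u + l2 * Eg m2 S u) 0 =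
     l1 * (S $ k $ j * m1 $ i + (S $ k $ i * m1 $ j + m1 $ k * (S $ j $ i + m1 $ j * m1 $ i))) +
     l2 * (S $ k $ j * m2 $ i + (S $ k $ i * m2 $ j + m2 $ k * (S $ j $ i + m2 $ j * m2 $ i)))"
  apply (simp only: pd_Cons' pd.simps(1))
  apply (simp add: assms)
  done

lemma P4: assumes "transpose S = S"
  shows "pd [i,j,k,l] (\<lambda>u. l1 * Eg m1 S u + l2 * Eg m2 S u) 0 =
    l1 *
     (S $ l $ k * (S $ j $ i + m1 $ j * m1 $ i) +
      (S $ l $ j * (S $ k $ i + m1 $ k * m1 $ i) +
       (S $ l $ i * (S $ k $ j + m1 $ k * m1 $ j) +
        m1 $ l *
        (S $ k $ j * m1 $ i +
         (S $ k $ i * m1 $ j + m1 $ k * (S $ j $ i + m1 $ j * m1 $ i)))))) +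
     l2 *
     (S $ l $ k * (S $ j $ i + m2 $ j * m2 $ i) +
      (S $ l $ j * (S $ k $ i + m2 $ k * m2 $ i) +
       (S $ l $ i * (S $ k $ j + m2 $ k * m2 $ j) +
        m2 $ l *
        (S $ k $ j * m2 $ i +
         (S $ k $ i * m2 $ j + m2 $ k * (S $ j $ i + m2 $ j * m2 $ i))))))"
  apply (simp only: pd_Cons' pd.simps(1))
  apply (simp add: assms)
  done

lemma K1:
  assumes "transpose S = S"
  shows "M4 ((m1,m2),(l1,l2),S) [j] = l1*m1$j + l2*m2$j"
  unfolding M4_def mgf_eq
  by (simp add: P1 assms del: pd.simps)

lemma K2:
  assumes "transpose S = S" "l1 + l2 = 1"
  shows "M4 ((m1,m2),(l1,l2),S) [j,k] - M4 ((m1,m2),(l1,l2),S) [j] * M4 ((m1,m2),(l1,l2),S) [k]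
     = S$k$j + l1*l2*(m1$j-m2$j)*(m1$k-m2$k)"
proof -
  have e: "M4 ((m1,m2),(l1,l2),S) [j,k] = (l1 * (S$k$j + m1$k * m1$j) + l2 * (S$k$j + m2$k * m2$j))"
    unfolding M4_def mgf_eq by (simp add: P2 assms del: pd.simps)
  show ?thesis unfolding e K1[OF assms(1)] by (rule c2s[OF assms(2)])
qed

lemma K3:
  fixes m1 m2 :: "real^'n::finite" and S :: "real^'n^'n" and l1 l2 :: real
  assumes "transpose S = S" "l1 + l2 = 1"
  shows "M4 ((m1,m2),(l1,l2),S) [a,a,j] - 2 * M4 ((m1,m2),(l1,l2),S) [a] * M4 ((m1,m2),(l1,l2),S) [a,j] - M4 ((m1,m2),(l1,l2),S) [j] * M4 ((m1,m2),(l1,l2),S) [a,a] + 2 * (M4 ((m1,m2),(l1,l2),S) [a])^2 * M4 ((m1,m2),(l1,l2),S) [j]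
     = l1*l2*(l2-l1)*(m1$a-m2$a)^2*(m1$j-m2$j)"
proof -
  have e3: "M4 ((m1,m2),(l1,l2),S) [a,a,j] = (l1 * (S$j$a * m1$a + (S$j$a * m1$a + m1$j * (S$a$a + m1$a * m1$a))) + l2 * (S$j$a * m2$a + (S$j$a * m2$a + m2$j * (S$a$a + m2$a * m2$a))))"
    unfolding M4_def mgf_eq by (simp add: P3 assms del: pd.simps)
  have e2: "M4 ((m1,m2),(l1,l2),S) [a,j] = (l1 * (S$j$a + m1$j * m1$a) + l2 * (S$j$a + m2$j * m2$a))"
    unfolding M4_def mgf_eq by (simp add: P2 assms del: pd.simps)
  have e2': "M4 ((m1,m2),(l1,l2),S) [a,a] = (l1 * (S$a$a + m1$a * m1$a) + l2 * (S$a$a + m2$a * m2$a))"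
    unfolding M4_def mgf_eq by (simp add: P2 assms del: pd.simps)
  show ?thesis unfolding e3 e2 e2' K1[OF assms(1)] by (rule c3s[OF assms(2)])
qed

lemma K4:
  fixes m1 m2 :: "real^'n::finite" and S :: "real^'n^'n" and l1 l2 :: real
  assumes "transpose S = S" "l1 + l2 = 1"
  shows "M4 ((m1,m2),(l1,l2),S) [a,a,a,a] - 4 * M4 ((m1,m2),(l1,l2),S) [a,a,a] * M4 ((m1,m2),(l1,l2),S) [a] - 3 * (M4 ((m1,m2),(l1,l2),S) [a,a])^2 + 12 * M4 ((m1,m2),(l1,l2),S) [a,a] * (M4 ((m1,m2),(l1,l2),S) [a])^2 - 6 * (M4 ((m1,m2),(l1,l2),S) [a])^4
     = l1*l2*(1-6*l1*l2)*(m1$a-m2$a)^4"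
proof -
  have e4: "M4 ((m1,m2),(l1,l2),S) [a,a,a,a] = (l1 * (S$a$a * (S$a$a + m1$a * m1$a) + (S$a$a * (S$a$a + m1$a * m1$a) + (S$a$a * (S$a$a + m1$a * m1$a) + m1$a * (S$a$a * m1$a + (S$a$a * m1$a + m1$a * (S$a$a + m1$a * m1$a)))))) + l2 * (S$a$a * (S$a$a + m2$a * m2$a) + (S$a$a * (S$a$a + m2$a * m2$a) + (S$a$a * (S$a$a + m2$a * m2$a) + m2$a * (S$a$a * m2$a + (S$a$a * m2$a + m2$a * (S$a$a + m2$a * m2$a)))))))"
    unfolding M4_def mgf_eq by (simp add: P4 assms del: pd.simps)
  have e3: "M4 ((m1,m2),(l1,l2),S) [a,a,a] = (l1 * (S$a$a * m1$a + (S$a$a * m1$a + m1$a * (S$a$a + m1$a * m1$a))) + l2 * (S$a$a * m2$a + (S$a$a * m2$a + m2$a * (S$a$a + m2$a * m2$a))))"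
    unfolding M4_def mgf_eq by (simp add: P3 assms del: pd.simps)
  have e2': "M4 ((m1,m2),(l1,l2),S) [a,a] = (l1 * (S$a$a + m1$a * m1$a) + l2 * (S$a$a + m2$a * m2$a))"
    unfolding M4_def mgf_eq by (simp add: P2 assms del: pd.simps)
  show ?thesis unfolding e4 e3 e2' K1[OF assms(1)] by (rule c4s[OF assms(2)])
qed



theorem corollary4p11:
  "\<exists>p :: ('n::finite) param \<Rightarrow> real.
     p \<in> param_polys \<and> (\<exists>\<theta>\<in>ThetaH. p \<theta> \<noteq> 0) \<and>
     (\<forall>\<theta>\<in>ThetaH. \<forall>\<theta>'\<in>ThetaH.
        p \<theta> \<noteq> 0 \<longrightarrow> weights_in_01 \<theta> \<longrightarrow> weights_in_01 \<theta>' \<longrightarrow>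
        M4 \<theta> = M4 \<theta>' \<longrightarrow> \<theta>' = \<theta> \<or> \<theta>' = swap_param \<theta>)"
proof -
  define a :: 'n where "a = undefined"
  define p :: "'n param \<Rightarrow> real" where
    "p = (\<lambda>\<theta>. (snd (fst (snd \<theta>)) + (-1) * fst (fst (snd \<theta>))) * (fst (fst \<theta>) $ a + (-1) * snd (fst \<theta>) $ a))"
  have pp: "p \<in> param_polys" unfolding p_def by (intro param_polys.intros)
  have ex: "\<exists>\<theta>\<in>ThetaH. p \<theta> \<noteq> 0"
  proof
    show "((axis a 1, 0), (1/4, 3/4), 0) \<in> (ThetaH :: 'n param set)"
      by (simp add: ThetaH_def transpose_def vec_eq_iff)
    show "p ((axis a 1, 0), (1/4, 3/4), 0) \<noteq> 0" by (simp add: p_def axis_def)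
  qed
  have main: "\<theta>' = \<theta> \<or> \<theta>' = swap_param \<theta>"
    if th: "\<theta> \<in> ThetaH" "\<theta>' \<in> ThetaH" and pn: "p \<theta> \<noteq> 0" and w: "weights_in_01 \<theta>" "weights_in_01 \<theta>'"
      and MM: "M4 \<theta> = M4 \<theta>'" for \<theta> \<theta>'
  proof -
    obtain m1 m2 l1 l2 S where t: "\<theta> = ((m1,m2),(l1,l2),S)" by (metis prod.exhaust)
    obtain n1 n2 k1 k2 T where t': "\<theta>' = ((n1,n2),(k1,k2),T)" by (metis prod.exhaust)
    have s: "l1 + l2 = 1" "transpose S = S" using th(1) t by (auto simp: ThetaH_def)
    have s': "k1 + k2 = 1" "transpose T = T" using th(2) t' by (auto simp: ThetaH_def)
    have b: "0 < l1" "l1 < 1" "0 < l2" "l2 < 1" using w(1) t by (auto simp: weights_in_01_def)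
    have b': "0 < k1" "k1 < 1" "0 < k2" "k2 < 1" using w(2) t' by (auto simp: weights_in_01_def)
    define x where "x = m1$a - m2$a"
    define x' where "x' = n1$a - n2$a"
    have nz: "(l2 - l1) * x \<noteq> 0" using pn t unfolding p_def x_def by simp
    have MM': "M4 ((m1,m2),(l1,l2),S) = M4 ((n1,n2),(k1,k2),T)" using MM t t' by simp
    have E1: "l1*m1$j + l2*m2$j = k1*n1$j + k2*n2$j" for j
      using K1[OF s(2), of m1 m2 l1 l2 j] K1[OF s'(2), of n1 n2 k1 k2 j] MM' by simp
    have E2: "S$k$j + l1*l2*(m1$j-m2$j)*(m1$k-m2$k) = T$k$j + k1*k2*(n1$j-n2$j)*(n1$k-n2$k)" for j k
      using K2[OF s(2,1), of m1 m2 j k] K2[OF s'(2,1), of n1 n2 j k] MM' by simp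
    have E3: "l1*l2*(l2-l1)*x^2*(m1$j-m2$j) = k1*k2*(k2-k1)*x'^2*(n1$j-n2$j)" for j
      using K3[OF s(2,1), of m1 m2 a j] K3[OF s'(2,1), of n1 n2 a j] MM' unfolding x_def x'_def by simp
    have E4: "l1*l2*(1-6*l1*l2)*x^4 = k1*k2*(1-6*k1*k2)*x'^4"
      using K4[OF s(2,1), of m1 m2 a] K4[OF s'(2,1), of n1 n2 a] MM' unfolding x_def x'_def by simp
    have C3: "l1*l2*(l2-l1)*x^3 = k1*k2*(k2-k1)*x'^3"
      using E3[of a] unfolding x_def[symmetric] x'_def[symmetric] by (simp add: power2_eq_square power3_eq_cube mult.assoc)
    have c0: "l1*l2*(l2-l1)*x^2 \<noteq> 0" using nz b by simp
    from key[OF s(1) s'(1) b(1,2) b'(1,2) C3 nz E4]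
    show ?thesis
    proof
      assume A: "k1 = l1 \<and> k2 = l2 \<and> x' = x"
      have d: "n1$j - n2$j = m1$j - m2$j" for j
        using E3[of j] A c0 by simp
      have mu1: "n1$j = m1$j" for j using E1[of j] d[of j] A s(1) by algebra
      have mu2: "n2$j = m2$j" for j using E1[of j] d[of j] A s(1) by algebra
      have "T$k$j = S$k$j" for j k using E2[of k j] d[of j] d[of k] A by simp
      then have "T = S" by (simp add: vec_eq_iff)
      moreover have "n1 = m1" "n2 = m2" using mu1 mu2 by (simp_all add: vec_eq_iff)
      ultimately show ?thesis using t t' A by simp
    next
      assume A: "k1 = l2 \<and> k2 = l1 \<and> x' = -x"
      have "l1*l2*(l2-l1)*x^2*(m1$j-m2$j) = l1*l2*(l2-l1)*x^2*(n2$j-n1$j)" for j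
        using E3[of j] A by (simp add: algebra_simps)
      then have d: "n2$j - n1$j = m1$j - m2$j" for j using c0 by simp
      have mu1: "n1$j = m2$j" for j using E1[of j] d[of j] A s(1) by algebra
      have mu2: "n2$j = m1$j" for j using E1[of j] d[of j] A s(1) by algebra
      have "T$k$j = S$k$j" for j k using E2[of k j] mu1[of j] mu2[of j] mu1[of k] mu2[of k] A
        by (simp add: algebra_simps)
      then have "T = S" by (simp add: vec_eq_iff)
      moreover have "n1 = m2" "n2 = m1" using mu1 mu2 by (simp_all add: vec_eq_iff)
      ultimately show ?thesis using t t' A by (simp add: swap_param_def)
    qed
  qed
  show ?thesis using pp ex main by blast
qed

end
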